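(* Let $R$ be a right Noetherian ring, $\alpha$ an automorphism of $R$, $S=R[\theta;\alpha]$, and let $u$ be a central unit of $R$. (a) The lattice of $\alpha$-stable right ideals of $R$ is isomorphic to the lattice of right $S$-submodules of $S/(u-\theta)S$ (via $N\mapsto ((u-\theta)S+N)/(u-\theta)S$). (b) If moreover $R$ is commutative, then the right $S$-module $S/(u-\theta)S$ is simple if and only if $R$ is $\alpha$-simple. (c) If moreover $R$ is a commutative domain with no nonzero proper idempotent ideals (e.g. $R$ a commutative Noetherian domain), then $S/(u-\theta)S$ is an Artinian right $S$-module if and only if $R$ is $\alpha$-simple.
   Context: $R[\theta;\alpha]$ denotes the skew polynomial ring of polynomials $\sum r_i\theta^i$ ($r_i\in R$) with multiplication determined by $\theta r=\alpha(r)\theta$ for $r\in R$. A (right) ideal $I$ of $R$ is $\alpha$-stable if $\alpha(I)=I$. $R$ is $\alpha$-simple if $(0)$ and $R$ are its only $\alpha$-stable ideals. *)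

theory Defs
  imports Main
begin

definition right_ideal :: "'a::ring_1 set \<Rightarrow> bool" where
  "right_ideal I \<longleftrightarrow> 0 \<in> I \<and> (\<forall>x\<in>I. \<forall>y\<in>I. x + y \<in> I) \<and> (\<forall>x\<in>I. - x \<in> I)
     \<and> (\<forall>x\<in>I. \<forall>r. x * r \<in> I)"

definition two_sided_ideal :: "'a::ring_1 set \<Rightarrow> bool" where
  "two_sided_ideal I \<longleftrightarrow> right_ideal I \<and> (\<forall>x\<in>I. \<forall>r. r * x \<in> I)"

definition right_noetherian :: "'a::ring_1 itself \<Rightarrow> bool" where
  "right_noetherian (T::'a itself) \<longleftrightarrow>
     (\<forall>f :: nat \<Rightarrow> 'a set. (\<forall>n. right_ideal (f n)) \<and> (\<forall>n. f n \<subseteq> f (Suc n))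
        \<longrightarrow> (\<exists>m. \<forall>n\<ge>m. f n = f m))"

definition ring_automorphism :: "('a::ring_1 \<Rightarrow> 'a) \<Rightarrow> bool" where
  "ring_automorphism \<alpha> \<longleftrightarrow> bij \<alpha> \<and> (\<forall>x y. \<alpha> (x + y) = \<alpha> x + \<alpha> y)
     \<and> (\<forall>x y. \<alpha> (x * y) = \<alpha> x * \<alpha> y) \<and> \<alpha> 1 = 1"

definition central_unit :: "'a::ring_1 \<Rightarrow> bool" where
  "central_unit u \<longleftrightarrow> (\<forall>x. u * x = x * u) \<and> (\<exists>v. u * v = 1 \<and> v * u = 1)"

definition alpha_simple :: "('a::ring_1 \<Rightarrow> 'a) \<Rightarrow> bool" where
  "alpha_simple \<alpha> \<longleftrightarrow> (\<forall>I. two_sided_ideal I \<and> \<alpha> ` I = I \<longrightarrow> I = {0} \<or> I = UNIV)"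

definition ideal_prod :: "'a::ring_1 set \<Rightarrow> 'a set \<Rightarrow> 'a set" where
  "ideal_prod I J = {(\<Sum>k<n. a k * b k) | (n::nat) a b. \<forall>k<n. a k \<in> I \<and> b k \<in> J}"

definition no_nontrivial_idempotent_ideals :: "'a::ring_1 itself \<Rightarrow> bool" where
  "no_nontrivial_idempotent_ideals (T::'a itself) \<longleftrightarrow>
     (\<forall>I :: 'a set. two_sided_ideal I \<and> ideal_prod I I = I \<longrightarrow> I = {0} \<or> I = UNIV)"

text \<open>A skew polynomial \<open>\<Sum> r_i \<theta>^i\<close> is its coefficient function with finite support.\<close>
definition skpoly :: "(nat \<Rightarrow> 'a::zero) set" where
  "skpoly = {p. finite {i. p i \<noteq> 0}}"

definition sk_add :: "(nat \<Rightarrow> 'a::ring_1) \<Rightarrow> (nat \<Rightarrow> 'a) \<Rightarrow> (nat \<Rightarrow> 'a)" where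
  "sk_add p q = (\<lambda>k. p k + q k)"

text \<open>Multiplication determined by \<open>\<theta> r = \<alpha>(r) \<theta>\<close>:
  \<open>(r \<theta>^i)(s \<theta>^j) = r \<alpha>^i(s) \<theta>^(i+j)\<close>.\<close>
definition sk_mult :: "('a::ring_1 \<Rightarrow> 'a) \<Rightarrow> (nat \<Rightarrow> 'a) \<Rightarrow> (nat \<Rightarrow> 'a) \<Rightarrow> (nat \<Rightarrow> 'a)" where
  "sk_mult \<alpha> p q = (\<lambda>k. \<Sum>i\<le>k. p i * (\<alpha> ^^ i) (q (k - i)))"

definition sk_C :: "'a::ring_1 \<Rightarrow> (nat \<Rightarrow> 'a)" where
  "sk_C r = (\<lambda>k. if k = 0 then r else 0)"

definition sk_theta :: "nat \<Rightarrow> 'a::ring_1" where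
  "sk_theta = (\<lambda>k. if k = 1 then 1 else 0)"

definition sk_zero :: "nat \<Rightarrow> 'a::ring_1" where
  "sk_zero = (\<lambda>k. 0)"

definition sk_gen :: "'a::ring_1 \<Rightarrow> (nat \<Rightarrow> 'a)" where
  "sk_gen u = sk_add (sk_C u) (\<lambda>k. - sk_theta k)"

definition genS :: "('a::ring_1 \<Rightarrow> 'a) \<Rightarrow> 'a \<Rightarrow> (nat \<Rightarrow> 'a) set" where
  "genS \<alpha> u = (\<lambda>s. sk_mult \<alpha> (sk_gen u) s) ` skpoly"

definition sk_coset :: "(nat \<Rightarrow> 'a::ring_1) set \<Rightarrow> (nat \<Rightarrow> 'a) \<Rightarrow> (nat \<Rightarrow> 'a) set" where
  "sk_coset I p = (\<lambda>x. sk_add p x) ` I"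

definition quot_carrier :: "(nat \<Rightarrow> 'a::ring_1) set \<Rightarrow> (nat \<Rightarrow> 'a) set set" where
  "quot_carrier I = sk_coset I ` skpoly"

definition quot_submodule ::
  "('a::ring_1 \<Rightarrow> 'a) \<Rightarrow> (nat \<Rightarrow> 'a) set \<Rightarrow> (nat \<Rightarrow> 'a) set set \<Rightarrow> bool" where
  "quot_submodule \<alpha> I M \<longleftrightarrow> M \<subseteq> quot_carrier I \<and> sk_coset I sk_zero \<in> M
     \<and> (\<forall>p\<in>skpoly. \<forall>q\<in>skpoly. sk_coset I p \<in> M \<longrightarrow> sk_coset I q \<in> M
            \<longrightarrow> sk_coset I (sk_add p q) \<in> M)
     \<and> (\<forall>p\<in>skpoly. sk_coset I p \<in> M \<longrightarrow> sk_coset I (\<lambda>k. - p k) \<in> M)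
     \<and> (\<forall>p\<in>skpoly. \<forall>s\<in>skpoly. sk_coset I p \<in> M \<longrightarrow> sk_coset I (sk_mult \<alpha> p s) \<in> M)"

definition quot_simple :: "('a::ring_1 \<Rightarrow> 'a) \<Rightarrow> (nat \<Rightarrow> 'a) set \<Rightarrow> bool" where
  "quot_simple \<alpha> I \<longleftrightarrow> quot_carrier I \<noteq> {sk_coset I sk_zero}
     \<and> (\<forall>M. quot_submodule \<alpha> I M \<longrightarrow> M = {sk_coset I sk_zero} \<or> M = quot_carrier I)"

definition quot_artinian :: "('a::ring_1 \<Rightarrow> 'a) \<Rightarrow> (nat \<Rightarrow> 'a) set \<Rightarrow> bool" where
  "quot_artinian \<alpha> I \<longleftrightarrow>
     (\<forall>f :: nat \<Rightarrow> (nat \<Rightarrow> 'a) set set. (\<forall>n. quot_submodule \<alpha> I (f n)) \<and> (\<forall>n. f (Suc n) \<subseteq> f n)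
        \<longrightarrow> (\<exists>m. \<forall>n\<ge>m. f n = f m))"

definition Phi :: "('a::ring_1 \<Rightarrow> 'a) \<Rightarrow> 'a \<Rightarrow> 'a set \<Rightarrow> (nat \<Rightarrow> 'a) set set" where
  "Phi \<alpha> u N = sk_coset (genS \<alpha> u) ` {sk_add x (sk_C n) | x n. x \<in> genS \<alpha> u \<and> n \<in> N}"

end

theory Submission
  imports Defs
begin


definition smono :: "'a::ring_1 \<Rightarrow> nat \<Rightarrow> nat \<Rightarrow> 'a" where
  "smono c n = (\<lambda>k. if k = n then c else 0)"

lemma skpoly_add: "p \<in> skpoly \<Longrightarrow> q \<in> skpoly \<Longrightarrow> sk_add p q \<in> skpoly"
  unfolding skpoly_def sk_add_def
  by (rule CollectI, erule CollectE, erule CollectE,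
      rule finite_subset[of _ "{i. p i \<noteq> 0} \<union> {i. q i \<noteq> 0}"]) auto

lemma skpoly_neg: "(p::nat\<Rightarrow>'a::ring_1) \<in> skpoly \<Longrightarrow> (\<lambda>k. - p k) \<in> skpoly"
proof -
  have "{i. - p i \<noteq> 0} = {i. p i \<noteq> 0}" by auto
  then show "p \<in> skpoly \<Longrightarrow> (\<lambda>k. - p k) \<in> skpoly" unfolding skpoly_def by simp
qed

lemma skpoly_smono: "smono c n \<in> skpoly"
  unfolding skpoly_def smono_def by (rule CollectI, rule finite_subset[of _ "{n}"]) auto

lemma skpoly_zero: "(\<lambda>k. 0) \<in> skpoly"
  unfolding skpoly_def by simp

lemma sk_C_smono: "sk_C r = smono r 0"
  unfolding sk_C_def smono_def by auto

lemma skpoly_C: "sk_C r \<in> skpoly"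
  by (simp add: sk_C_smono skpoly_smono)

lemma skpoly_bound: "p \<in> skpoly \<longleftrightarrow> (\<exists>M. \<forall>k>M. p k = 0)"
proof
  assume "p \<in> skpoly"
  then obtain M where M: "\<forall>n\<in>{i. p i \<noteq> 0}. n \<le> M"
    unfolding skpoly_def finite_nat_set_iff_bounded_le by blast
  have "\<forall>k>M. p k = 0"
  proof (intro allI impI)
    fix k assume k: "k > M"
    show "p k = 0"
    proof (rule ccontr)
      assume "p k \<noteq> 0"
      then have "k \<le> M" using M by blast
      with k show False by simp
    qed
  qed
  then show "\<exists>M. \<forall>k>M. p k = 0" by blast
next
  assume "\<exists>M. \<forall>k>M. p k = 0"
  then obtain M where M: "\<forall>k>M. p k = 0" by blast
  have "{i. p i \<noteq> 0} \<subseteq> {..M}"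
  proof
    fix x assume "x \<in> {i. p i \<noteq> 0}"
    then have "\<not> x > M" using M by auto
    then show "x \<in> {..M}" by simp
  qed
  then show "p \<in> skpoly" unfolding skpoly_def using finite_subset by blast
qed

lemma skpoly_induct[consumes 1, case_names zero step]:
  assumes "p \<in> skpoly" "P (\<lambda>k. 0)"
    "\<And>q c n. q \<in> skpoly \<Longrightarrow> P q \<Longrightarrow> P (sk_add q (smono c n))"
  shows "P p"
proof -
  have "\<forall>p. {i. p i \<noteq> 0} \<subseteq> A \<longrightarrow> P p" if "finite A" for A
    using that
  proof (induction A rule: finite_induct)
    case empty
    show ?case
    proof (intro allI impI)
      fix p :: "nat \<Rightarrow> 'a" assume "{i. p i \<noteq> 0} \<subseteq> {}"
      then have "\<forall>k. p k = 0" by blast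
      then have "p = (\<lambda>k. 0)" by (simp add: fun_eq_iff)
      then show "P p" using assms(2) by simp
    qed
  next
    case (insert a A)
    show ?case
    proof (intro allI impI)
      fix p :: "nat \<Rightarrow> 'a" assume h: "{i. p i \<noteq> 0} \<subseteq> insert a A"
      define q where "q = p(a := 0)"
      have qs: "{i. q i \<noteq> 0} \<subseteq> A" using h by (auto simp: q_def)
      hence "q \<in> skpoly" using insert(1) unfolding skpoly_def by (auto intro: finite_subset)
      moreover have "P q" using insert(3) qs by blast
      ultimately have "P (sk_add q (smono (p a) a))" by (rule assms(3))
      moreover have peq: "sk_add q (smono (p a) a) = p"
        by (rule ext) (simp add: q_def sk_add_def smono_def)
      ultimately show "P p" by simp
    qed
  qed
  then show ?thesis using assms(1) unfolding skpoly_def by blast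
qed

lemma additive_sum:
  assumes "\<And>x y. h (x + y) = h x + h y" "h 0 = 0"
  shows "h (sum f A) = (\<Sum>i\<in>A. h (f i))"
  by (induct A rule: infinite_finite_induct) (auto simp: assms)

lemma sum_concat:
  fixes n m :: nat
  shows "(\<Sum>k<n. f k) + (\<Sum>k<m. g k) = (\<Sum>k<n+m. if k < n then f k else g (k - n))"
  by (induct m) (simp_all add: add.assoc[symmetric])

lemma sk_mult_add_left:
  "sk_mult \<alpha> (sk_add p q) s = sk_add (sk_mult \<alpha> p s) (sk_mult \<alpha> q s)"
  unfolding sk_mult_def sk_add_def by (rule ext) (simp add: distrib_right sum.distrib)

lemma sk_mult_zero_left: "sk_mult \<alpha> (\<lambda>k. 0) s = (\<lambda>k. 0)"
  unfolding sk_mult_def by simp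

lemma sk_mult_smono_left:
  "sk_mult \<alpha> (smono a i) s = (\<lambda>k. if i \<le> k then a * (\<alpha>^^i) (s (k - i)) else 0)"
proof (rule ext)
  fix k
  have "sk_mult \<alpha> (smono a i) s k = (\<Sum>l\<le>k. if l = i then a * (\<alpha>^^l) (s (k - l)) else 0)"
    unfolding sk_mult_def smono_def by (rule sum.cong) auto
  also have "\<dots> = (if i \<le> k then a * (\<alpha>^^i) (s (k - i)) else 0)"
    by (simp add: sum.delta)
  finally show "sk_mult \<alpha> (smono a i) s k = (if i \<le> k then a * (\<alpha>^^i) (s (k - i)) else 0)" .
qed

lemma sk_mult_C_left: "sk_mult \<alpha> (sk_C x) s = (\<lambda>k. x * s k)"
  by (simp add: sk_C_smono sk_mult_smono_left)




locale skew =
  fixes \<alpha> :: "'a::ring_1 \<Rightarrow> 'a" and u :: 'a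
  assumes aut: "ring_automorphism \<alpha>" and cu: "central_unit u"
begin

lemma a_add: "\<alpha> (x + y) = \<alpha> x + \<alpha> y" using aut unfolding ring_automorphism_def by blast
lemma a_mult: "\<alpha> (x * y) = \<alpha> x * \<alpha> y" using aut unfolding ring_automorphism_def by blast
lemma a_one: "\<alpha> 1 = 1" using aut unfolding ring_automorphism_def by blast
lemma a_bij: "bij \<alpha>" using aut unfolding ring_automorphism_def by blast
lemma a_inj: "inj \<alpha>" using a_bij bij_is_inj by blast
lemma a_surj: "surj \<alpha>" using a_bij bij_is_surj by blast
lemma a_zero: "\<alpha> 0 = 0" using a_add[of 0 0] by simp
lemma a_neg: "\<alpha> (- x) = - \<alpha> x"
  using a_add[of x "-x"] a_zero minus_unique[of "\<alpha> x" "\<alpha> (-x)"] by simp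
lemma ai_a: "inv \<alpha> (\<alpha> x) = x" using a_inj by (simp add: inv_f_f)
lemma a_ai: "\<alpha> (inv \<alpha> x) = x" using a_surj by (simp add: surj_f_inv_f)
lemma ai_mult: "inv \<alpha> (x * y) = inv \<alpha> x * inv \<alpha> y"
  by (metis a_ai a_mult ai_a)
lemma ai_one: "inv \<alpha> 1 = 1" by (metis a_one ai_a)
lemma ai_neg: "inv \<alpha> (- x) = - inv \<alpha> x" by (metis a_ai a_neg ai_a)
lemma ap_add: "(\<alpha>^^n) (x + y) = (\<alpha>^^n) x + (\<alpha>^^n) y"
  by (induct n) (auto simp: a_add)
lemma ap_zero: "(\<alpha>^^n) 0 = 0"
  by (induct n) (auto simp: a_zero)

lemma uc: "u * x = x * u" using cu unfolding central_unit_def by blast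
lemma u_inv: "\<exists>v. u * v = 1 \<and> v * u = 1" using cu unfolding central_unit_def by blast

definition beta :: "'a \<Rightarrow> 'a" where "beta x = u * inv \<alpha> x"

lemma beta_add: "beta (x + y) = beta x + beta y"
  unfolding beta_def by (metis a_add a_ai ai_a distrib_left)
lemma beta_zero: "beta 0 = 0" using beta_add[of 0 0] by simp
lemma beta_neg: "beta (- x) = - beta x" unfolding beta_def by (simp add: ai_neg)
lemma bp_add: "(beta^^n) (x + y) = (beta^^n) x + (beta^^n) y"
  by (induct n) (auto simp: beta_add)
lemma bp_zero: "(beta^^n) 0 = 0"
  by (induct n) (auto simp: beta_zero)
lemma bp_neg: "(beta^^n) (- x) = - (beta^^n) x"
  by (induct n) (auto simp: beta_neg)
lemma beta_a: "beta (r * \<alpha> t) = beta r * t"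
  unfolding beta_def by (simp add: ai_mult ai_a mult.assoc)
lemma bp_a: "(beta^^i) (r * (\<alpha>^^i) t) = (beta^^i) r * t"
proof (induct i arbitrary: t)
  case 0 then show ?case by simp
next
  case (Suc i)
  have "(\<alpha>^^Suc i) t = (\<alpha>^^i) (\<alpha> t)" by (simp only: funpow_Suc_right comp_apply)
  then show ?case using Suc[of "\<alpha> t"] by (simp add: beta_a)
qed

lemma skpoly_mult: "p \<in> skpoly \<Longrightarrow> q \<in> skpoly \<Longrightarrow> sk_mult \<alpha> p q \<in> skpoly"
proof -
  assume "p \<in> skpoly" "q \<in> skpoly"
  then obtain M1 M2 where m1: "\<forall>k>M1. p k = 0" and m2: "\<forall>k>M2. q k = 0"
    unfolding skpoly_bound by blast
  have "\<forall>k>M1+M2. sk_mult \<alpha> p q k = 0"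
  proof (intro allI impI)
    fix k assume k: "k > M1 + M2"
    show "sk_mult \<alpha> p q k = 0" unfolding sk_mult_def
    proof (rule sum.neutral, rule ballI)
      fix i assume "i \<in> {..k}"
      show "p i * (\<alpha> ^^ i) (q (k - i)) = 0"
      proof (cases "i > M1")
        case True then show ?thesis using m1 by simp
      next
        case False then have "k - i > M2" using k by linarith
        then show ?thesis using m2 by (simp add: ap_zero)
      qed
    qed
  qed
  then show ?thesis unfolding skpoly_bound by blast
qed

lemma sk_mult_add_right:
  "sk_mult \<alpha> p (sk_add s t) = sk_add (sk_mult \<alpha> p s) (sk_mult \<alpha> p t)"
  unfolding sk_mult_def sk_add_def by (rule ext) (simp add: ap_add distrib_left sum.distrib)

lemma sk_mult_zero_right: "sk_mult \<alpha> p (\<lambda>k. 0) = (\<lambda>k. 0)"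
  unfolding sk_mult_def by (simp add: ap_zero)

definition eps :: "(nat \<Rightarrow> 'a) \<Rightarrow> 'a" where
  "eps p = (\<Sum>k | p k \<noteq> 0. (beta^^k) (p k))"

lemma eps_sum: "finite A \<Longrightarrow> {k. p k \<noteq> 0} \<subseteq> A \<Longrightarrow> eps p = (\<Sum>k\<in>A. (beta^^k) (p k))"
  unfolding eps_def by (rule sum.mono_neutral_left) (auto simp: bp_zero)

lemma fin_supp: "p \<in> skpoly \<Longrightarrow> finite {k. p k \<noteq> 0}" by (simp add: skpoly_def)

lemma eps_add: "p \<in> skpoly \<Longrightarrow> q \<in> skpoly \<Longrightarrow> eps (sk_add p q) = eps p + eps q"
proof -
  assume "p \<in> skpoly" "q \<in> skpoly"
  then have f: "finite ({k. p k \<noteq> 0} \<union> {k. q k \<noteq> 0})" by (simp add: fin_supp)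
  have "eps (sk_add p q) = (\<Sum>k\<in>{k. p k \<noteq> 0} \<union> {k. q k \<noteq> 0}. (beta^^k) (sk_add p q k))"
    by (rule eps_sum[OF f]) (auto simp: sk_add_def)
  also have "\<dots> = (\<Sum>k\<in>{k. p k \<noteq> 0} \<union> {k. q k \<noteq> 0}. (beta^^k) (p k))
      + (\<Sum>k\<in>{k. p k \<noteq> 0} \<union> {k. q k \<noteq> 0}. (beta^^k) (q k))"
    by (simp add: sk_add_def bp_add sum.distrib)
  also have "\<dots> = eps p + eps q"
    using eps_sum[OF f, of p] eps_sum[OF f, of q] by auto
  finally show ?thesis .
qed

lemma eps_neg: "p \<in> skpoly \<Longrightarrow> eps (\<lambda>k. - p k) = - eps p"
proof -
  assume "p \<in> skpoly"
  then have f: "finite {k. p k \<noteq> 0}" by (simp add: fin_supp)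
  have "eps (\<lambda>k. - p k) = (\<Sum>k\<in>{k. p k \<noteq> 0}. (beta^^k) (- p k))"
    by (rule eps_sum[OF f]) auto
  also have "\<dots> = - eps p" using eps_sum[OF f, of p] by (simp add: bp_neg sum_negf)
  finally show ?thesis .
qed

lemma eps_smono: "eps (smono c n) = (beta^^n) c"
  by (subst eps_sum[of "{n}"]) (auto simp: smono_def)

lemma eps_zero: "eps (\<lambda>k. 0) = 0" unfolding eps_def by simp

lemma eps_C: "eps (sk_C r) = r" by (simp add: sk_C_smono eps_smono)

definition act :: "'a \<Rightarrow> (nat \<Rightarrow> 'a) \<Rightarrow> 'a" where
  "act r s = (\<Sum>j | s j \<noteq> 0. (beta^^j) (r * s j))"

lemma act_sum: "finite A \<Longrightarrow> {k. s k \<noteq> 0} \<subseteq> A \<Longrightarrow> act r s = (\<Sum>j\<in>A. (beta^^j) (r * s j))"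
  unfolding act_def by (rule sum.mono_neutral_left) (auto simp: bp_zero)

lemma act_add: "act (x + y) s = act x s + act y s"
  unfolding act_def by (simp add: distrib_right bp_add sum.distrib)

lemma act_zero: "act 0 s = 0"
  unfolding act_def by (simp add: bp_zero)

lemma eps_mult_smono:
  assumes s: "s \<in> skpoly"
  shows "eps (sk_mult \<alpha> (smono c n) s) = act ((beta^^n) c) s"
proof -
  define S where "S = {j. s j \<noteq> 0}"
  have fS: "finite S" using s by (simp add: S_def fin_supp)
  have sub: "{k. sk_mult \<alpha> (smono c n) s k \<noteq> 0} \<subseteq> (+) n ` S"
  proof
    fix k assume "k \<in> {k. sk_mult \<alpha> (smono c n) s k \<noteq> 0}"
    then have h: "n \<le> k" "c * (\<alpha>^^n) (s (k - n)) \<noteq> 0" by (auto simp: sk_mult_smono_left split: if_splits)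
    then have "s (k - n) \<noteq> 0" by (auto simp: ap_zero)
    then show "k \<in> (+) n ` S" using h(1) unfolding S_def
      by (metis (mono_tags, lifting) image_eqI le_add_diff_inverse mem_Collect_eq)
  qed
  have "eps (sk_mult \<alpha> (smono c n) s) = (\<Sum>k\<in>(+) n ` S. (beta^^k) (sk_mult \<alpha> (smono c n) s k))"
    by (rule eps_sum[OF _ sub]) (simp add: fS)
  also have "\<dots> = (\<Sum>j\<in>S. (beta^^(n+j)) (sk_mult \<alpha> (smono c n) s (n+j)))"
    by (subst sum.reindex) auto
  also have "\<dots> = (\<Sum>j\<in>S. (beta^^j) ((beta^^n) (c * (\<alpha>^^n) (s j))))"
    by (rule sum.cong) (auto simp: sk_mult_smono_left add.commute[of n] funpow_add)
  also have "\<dots> = (\<Sum>j\<in>S. (beta^^j) ((beta^^n) c * s j))"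
    by (simp add: bp_a)
  also have "\<dots> = act ((beta^^n) c) s"
    by (rule act_sum[symmetric, OF fS]) (auto simp: S_def)
  finally show ?thesis .
qed

lemma eps_mult:
  assumes p: "p \<in> skpoly" and s: "s \<in> skpoly"
  shows "eps (sk_mult \<alpha> p s) = act (eps p) s"
  using p
proof (induction rule: skpoly_induct)
  case zero
  then show ?case by (simp add: sk_mult_zero_left eps_zero act_zero)
next
  case (step q c n)
  have "eps (sk_mult \<alpha> (sk_add q (smono c n)) s)
      = eps (sk_mult \<alpha> q s) + eps (sk_mult \<alpha> (smono c n) s)"
    by (simp add: sk_mult_add_left eps_add skpoly_mult step.hyps s skpoly_smono)
  also have "\<dots> = act (eps q) s + act ((beta^^n) c) s"
    using step.IH eps_mult_smono[OF s] by simp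
  also have "\<dots> = act (eps (sk_add q (smono c n))) s"
    by (simp add: act_add eps_add step.hyps skpoly_smono eps_smono)
  finally show ?case .
qed

end



context skew begin

abbreviation "I \<equiv> genS \<alpha> u"

lemma sk_gen_eq: "sk_gen u = sk_add (smono u 0) (smono (-1) 1)"
  unfolding sk_gen_def sk_add_def sk_C_def sk_theta_def smono_def by (rule ext) auto

lemma skpoly_gen: "sk_gen u \<in> skpoly"
  by (simp add: sk_gen_eq skpoly_add skpoly_smono)

lemma eps_gen: "eps (sk_gen u) = 0"
proof -
  have "inv \<alpha> (-1) = -1" using ai_neg[of 1] ai_one by simp
  then show ?thesis by (simp add: sk_gen_eq eps_add skpoly_smono eps_smono beta_def)
qed

lemma genS_skpoly: "g \<in> I \<Longrightarrow> g \<in> skpoly"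
  unfolding genS_def using skpoly_mult skpoly_gen by blast

lemma genS_eps: "g \<in> I \<Longrightarrow> eps g = 0"
  unfolding genS_def by (auto simp: eps_mult skpoly_gen eps_gen act_zero)

lemma genS_zero: "(\<lambda>k. 0) \<in> I"
  unfolding genS_def using sk_mult_zero_right skpoly_zero by (metis image_eqI)

lemma genS_add: "g \<in> I \<Longrightarrow> h \<in> I \<Longrightarrow> sk_add g h \<in> I"
  unfolding genS_def by (auto simp: sk_mult_add_right[symmetric] intro!: imageI skpoly_add)

lemma G_smono: "sk_mult \<alpha> (sk_gen u) (smono d m) = sk_add (smono (u*d) m) (smono (- \<alpha> d) (Suc m))"
  unfolding sk_gen_eq sk_mult_add_left sk_mult_smono_left
  by (rule ext) (auto simp: smono_def sk_add_def a_zero)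

lemma genS_smono: "(\<lambda>k. smono c (Suc n) k - smono (beta c) n k) \<in> I"
proof -
  have "(\<lambda>k. smono c (Suc n) k - smono (beta c) n k)
      = sk_mult \<alpha> (sk_gen u) (smono (- inv \<alpha> c) n)"
    unfolding G_smono by (rule ext) (auto simp: smono_def sk_add_def beta_def a_neg a_ai)
  then show ?thesis unfolding genS_def using skpoly_smono by auto
qed

lemma genS_mono: "(\<lambda>k. smono c n k - sk_C ((beta^^n) c) k) \<in> I"
proof (induct n arbitrary: c)
  case 0
  then show ?case using genS_zero by (simp add: sk_C_smono)
next
  case (Suc n)
  have b: "(beta^^Suc n) c = (beta^^n) (beta c)" by (simp only: funpow_Suc_right comp_apply)
  have "(\<lambda>k. smono c (Suc n) k - sk_C ((beta^^Suc n) c) k)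
     = sk_add (\<lambda>k. smono c (Suc n) k - smono (beta c) n k)
              (\<lambda>k. smono (beta c) n k - sk_C ((beta^^n) (beta c)) k)"
    unfolding b by (rule ext) (simp add: sk_add_def)
  then show ?case using genS_add[OF genS_smono Suc[of "beta c"]] by simp
qed

lemma genS_decomp: "p \<in> skpoly \<Longrightarrow> (\<lambda>k. p k - sk_C (eps p) k) \<in> I"
proof (induction rule: skpoly_induct)
  case zero
  then show ?case using genS_zero by (simp add: eps_zero sk_C_def)
next
  case (step q c n)
  have e: "eps (sk_add q (smono c n)) = eps q + (beta^^n) c"
    by (simp add: eps_add step.hyps skpoly_smono eps_smono)
  have "(\<lambda>k. sk_add q (smono c n) k - sk_C (eps (sk_add q (smono c n))) k)
     = sk_add (\<lambda>k. q k - sk_C (eps q) k) (\<lambda>k. smono c n k - sk_C ((beta^^n) c) k)"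
    unfolding e by (rule ext) (auto simp: sk_add_def sk_C_def algebra_simps)
  then show ?case using genS_add[OF step.IH genS_mono] by simp
qed

lemma genS_char: "g \<in> I \<longleftrightarrow> g \<in> skpoly \<and> eps g = 0"
proof
  assume "g \<in> skpoly \<and> eps g = 0"
  then show "g \<in> I" using genS_decomp[of g] by (simp add: sk_C_def)
qed (simp add: genS_skpoly genS_eps)

lemma skpoly_diff: "(p::nat\<Rightarrow>'a) \<in> skpoly \<Longrightarrow> q \<in> skpoly \<Longrightarrow> (\<lambda>k. p k - q k) \<in> skpoly"
proof -
  assume "p \<in> skpoly" "q \<in> skpoly"
  then have "sk_add p (\<lambda>k. - q k) \<in> skpoly" by (simp add: skpoly_add skpoly_neg)
  moreover have "sk_add p (\<lambda>k. - q k) = (\<lambda>k. p k - q k)" by (rule ext) (simp add: sk_add_def)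
  ultimately show ?thesis by simp
qed

lemma eps_diff: "(p::nat\<Rightarrow>'a) \<in> skpoly \<Longrightarrow> q \<in> skpoly \<Longrightarrow> eps (\<lambda>k. p k - q k) = eps p - eps q"
proof -
  assume "p \<in> skpoly" "q \<in> skpoly"
  moreover have "sk_add p (\<lambda>k. - q k) = (\<lambda>k. p k - q k)" by (rule ext) (simp add: sk_add_def)
  ultimately show ?thesis using eps_add[of p "\<lambda>k. - q k"] eps_neg[of q] skpoly_neg[of q] by simp
qed

lemma coset_sub:
  assumes p: "p \<in> skpoly" and q: "q \<in> skpoly" and e: "eps p = eps q"
  shows "sk_coset I p \<subseteq> sk_coset I q"
proof
  fix x assume "x \<in> sk_coset I p"
  then obtain g where g: "g \<in> I" "x = sk_add p g" unfolding sk_coset_def by blast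
  define h where "h = sk_add (\<lambda>k. p k - q k) g"
  have hs: "h \<in> skpoly" using g p q by (simp add: h_def skpoly_add skpoly_diff genS_skpoly)
  have "eps h = 0" using g p q e
    by (simp add: h_def eps_add skpoly_diff genS_skpoly eps_diff genS_eps)
  then have "h \<in> I" using hs genS_char by blast
  moreover have "x = sk_add q h" using g(2) by (rule_tac ext) (simp add: h_def sk_add_def)
  ultimately show "x \<in> sk_coset I q" unfolding sk_coset_def by blast
qed

lemma coset_eq:
  assumes p: "p \<in> skpoly" and q: "q \<in> skpoly"
  shows "sk_coset I p = sk_coset I q \<longleftrightarrow> eps p = eps q"
proof
  assume h: "sk_coset I p = sk_coset I q"
  have "p = sk_add p (\<lambda>k. 0)" by (simp add: sk_add_def)
  then have "p \<in> sk_coset I p" unfolding sk_coset_def using genS_zero by blast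
  then obtain g where g: "g \<in> I" "p = sk_add q g" using h unfolding sk_coset_def by blast
  have "eps (sk_add q g) = eps q + eps g" using q genS_skpoly[OF g(1)] by (rule eps_add)
  then show "eps p = eps q" using g genS_eps[OF g(1)] by simp
next
  assume e: "eps p = eps q"
  show "sk_coset I p = sk_coset I q"
    by (rule equalityI[OF coset_sub[OF p q e] coset_sub[OF q p e[symmetric]]])
qed

lemma Phi_char: "Phi \<alpha> u N = {sk_coset I p | p. p \<in> skpoly \<and> eps p \<in> N}"
proof
  show "Phi \<alpha> u N \<subseteq> {sk_coset I p | p. p \<in> skpoly \<and> eps p \<in> N}"
  proof
    fix z assume "z \<in> Phi \<alpha> u N"
    then obtain x n where xn: "x \<in> I" "n \<in> N" "z = sk_coset I (sk_add x (sk_C n))"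
      unfolding Phi_def by blast
    have "sk_add x (sk_C n) \<in> skpoly" using xn by (simp add: skpoly_add genS_skpoly skpoly_C)
    moreover have "eps (sk_add x (sk_C n)) = n"
      using xn by (simp add: eps_add genS_skpoly skpoly_C genS_eps eps_C)
    ultimately show "z \<in> {sk_coset I p | p. p \<in> skpoly \<and> eps p \<in> N}" using xn by auto
  qed
next
  show "{sk_coset I p | p. p \<in> skpoly \<and> eps p \<in> N} \<subseteq> Phi \<alpha> u N"
  proof
    fix z assume "z \<in> {sk_coset I p | p. p \<in> skpoly \<and> eps p \<in> N}"
    then obtain p where p: "p \<in> skpoly" "eps p \<in> N" "z = sk_coset I p" by blast
    have "p = sk_add (\<lambda>k. p k - sk_C (eps p) k) (sk_C (eps p))"
      by (rule ext) (simp add: sk_add_def)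
    then show "z \<in> Phi \<alpha> u N" unfolding Phi_def using p genS_decomp[OF p(1)] by blast
  qed
qed

lemma Phi_mem: "q \<in> skpoly \<Longrightarrow> sk_coset I q \<in> Phi \<alpha> u N \<longleftrightarrow> eps q \<in> N"
proof -
  assume q: "q \<in> skpoly"
  show ?thesis
  proof
    assume "sk_coset I q \<in> Phi \<alpha> u N"
    then obtain p where "p \<in> skpoly" "eps p \<in> N" "sk_coset I q = sk_coset I p"
      unfolding Phi_char by blast
    then show "eps q \<in> N" using coset_eq[OF q] by metis
  qed (use q in \<open>auto simp: Phi_char\<close>)
qed

lemma Phi_carrier: "quot_carrier I = Phi \<alpha> u UNIV"
  unfolding Phi_char quot_carrier_def by auto

lemma Phi_le: "Phi \<alpha> u N1 \<subseteq> Phi \<alpha> u N2 \<longleftrightarrow> N1 \<subseteq> N2"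
proof
  assume h: "Phi \<alpha> u N1 \<subseteq> Phi \<alpha> u N2"
  show "N1 \<subseteq> N2"
  proof
    fix r assume "r \<in> N1"
    then have "sk_coset I (sk_C r) \<in> Phi \<alpha> u N1" by (simp add: Phi_mem skpoly_C eps_C)
    then have "sk_coset I (sk_C r) \<in> Phi \<alpha> u N2" using h by blast
    then have "eps (sk_C r) \<in> N2" using Phi_mem[OF skpoly_C] by blast
    then show "r \<in> N2" by (simp add: eps_C)
  qed
qed (auto simp: Phi_char)

lemma Phi_inj: "Phi \<alpha> u N1 = Phi \<alpha> u N2 \<Longrightarrow> N1 = N2"
  using Phi_le by blast

lemma Phi_zero: "Phi \<alpha> u {0} = {sk_coset I sk_zero}"
proof -
  have z: "sk_zero \<in> skpoly" "eps sk_zero = 0" by (simp_all add: sk_zero_def skpoly_zero eps_zero)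
  show ?thesis unfolding Phi_char using z coset_eq[OF _ z(1)] by auto
qed

end



lemma ri_sum: "right_ideal N \<Longrightarrow> (\<forall>j\<in>A. f j \<in> N) \<Longrightarrow> sum f A \<in> N"
  unfolding right_ideal_def by (induct A rule: infinite_finite_induct) auto

lemma ri_zero: "right_ideal N \<Longrightarrow> 0 \<in> N" unfolding right_ideal_def by blast
lemma ri_add: "right_ideal N \<Longrightarrow> x \<in> N \<Longrightarrow> y \<in> N \<Longrightarrow> x + y \<in> N" unfolding right_ideal_def by blast
lemma ri_neg: "right_ideal N \<Longrightarrow> x \<in> N \<Longrightarrow> - x \<in> N" unfolding right_ideal_def by blast
lemma ri_mult: "right_ideal N \<Longrightarrow> x \<in> N \<Longrightarrow> x * r \<in> N" unfolding right_ideal_def by blast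

context skew begin

lemma beta_N: "right_ideal N \<Longrightarrow> \<alpha> ` N = N \<Longrightarrow> x \<in> N \<Longrightarrow> beta x \<in> N"
proof -
  assume N: "right_ideal N" "\<alpha> ` N = N" "x \<in> N"
  then obtain y where y: "y \<in> N" "x = \<alpha> y" by (metis imageE)
  then have "inv \<alpha> x = y" by (simp add: ai_a)
  then show "beta x \<in> N" unfolding beta_def using uc ri_mult[OF N(1) y(1)] by simp
qed

lemma bp_N: "right_ideal N \<Longrightarrow> \<alpha> ` N = N \<Longrightarrow> x \<in> N \<Longrightarrow> (beta^^n) x \<in> N"
  by (induct n) (auto simp: beta_N)

lemma Phi_submodule:
  assumes N: "right_ideal N" "\<alpha> ` N = N"
  shows "quot_submodule \<alpha> I (Phi \<alpha> u N)"
  unfolding quot_submodule_def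
proof (intro conjI ballI impI)
  show "Phi \<alpha> u N \<subseteq> quot_carrier I" unfolding Phi_carrier Phi_le by simp
  show "sk_coset I sk_zero \<in> Phi \<alpha> u N"
    by (simp add: Phi_mem sk_zero_def skpoly_zero eps_zero ri_zero[OF N(1)])
next
  fix p q assume pq: "p \<in> skpoly" "q \<in> skpoly" "sk_coset I p \<in> Phi \<alpha> u N" "sk_coset I q \<in> Phi \<alpha> u N"
  then show "sk_coset I (sk_add p q) \<in> Phi \<alpha> u N"
    by (simp add: Phi_mem skpoly_add eps_add ri_add[OF N(1)])
next
  fix p assume p: "p \<in> skpoly" "sk_coset I p \<in> Phi \<alpha> u N"
  then show "sk_coset I (\<lambda>k. - p k) \<in> Phi \<alpha> u N"
    by (simp add: Phi_mem skpoly_neg eps_neg ri_neg[OF N(1)])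
next
  fix p s :: "nat \<Rightarrow> 'a" assume p: "p \<in> skpoly" "s \<in> skpoly" "sk_coset I p \<in> Phi \<alpha> u N"
  then have e: "eps p \<in> N" by (simp add: Phi_mem)
  have "act (eps p) s \<in> N" unfolding act_def
    by (rule ri_sum[OF N(1)]) (auto intro!: bp_N[OF N] ri_mult[OF N(1) e])
  then show "sk_coset I (sk_mult \<alpha> p s) \<in> Phi \<alpha> u N"
    using p by (simp add: Phi_mem skpoly_mult eps_mult)
qed

lemma ri_image: "right_ideal N \<Longrightarrow> right_ideal (\<alpha> ` N)"
  unfolding right_ideal_def
proof (intro conjI ballI allI)
  assume N: "0 \<in> N \<and> (\<forall>x\<in>N. \<forall>y\<in>N. x + y \<in> N) \<and> (\<forall>x\<in>N. - x \<in> N) \<and> (\<forall>x\<in>N. \<forall>r. x * r \<in> N)"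
  show "0 \<in> \<alpha> ` N" using N a_zero by (metis image_eqI)
  fix x assume x: "x \<in> \<alpha> ` N"
  then obtain a where a: "a \<in> N" "x = \<alpha> a" by blast
  show "- x \<in> \<alpha> ` N" using N a by (metis a_neg image_eqI)
  fix r show "x * r \<in> \<alpha> ` N" using N a by (metis a_ai a_mult image_eqI)
next
  fix x y assume N: "0 \<in> N \<and> (\<forall>x\<in>N. \<forall>y\<in>N. x + y \<in> N) \<and> (\<forall>x\<in>N. - x \<in> N) \<and> (\<forall>x\<in>N. \<forall>r. x * r \<in> N)"
    and x: "x \<in> \<alpha> ` N" and y: "y \<in> \<alpha> ` N"
  then show "x + y \<in> \<alpha> ` N" by (auto simp: a_add[symmetric])
qed

lemma C_add: "sk_add (sk_C x) (sk_C y) = sk_C (x + y)"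
  unfolding sk_add_def sk_C_def by auto
lemma C_neg: "(\<lambda>k. - sk_C x k) = sk_C (- x)"
  unfolding sk_C_def by auto
lemma C_mult: "sk_mult \<alpha> (sk_C x) (sk_C y) = sk_C (x * y)"
  unfolding sk_mult_C_left unfolding sk_C_def by auto
lemma C_zero: "sk_C 0 = sk_zero"
  unfolding sk_C_def sk_zero_def by auto

lemma coset_C: "q \<in> skpoly \<Longrightarrow> sk_coset I q = sk_coset I (sk_C (eps q))"
  by (simp add: coset_eq skpoly_C eps_C)

lemma Phi_surj:
  assumes noeth: "right_noetherian TYPE('a)"
    and M: "quot_submodule \<alpha> I M"
  shows "\<exists>N. right_ideal N \<and> \<alpha> ` N = N \<and> M = Phi \<alpha> u N"
proof -
  define N where "N = {r. sk_coset I (sk_C r) \<in> M}"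
  have Mc: "M \<subseteq> quot_carrier I"
    and M0: "sk_coset I sk_zero \<in> M"
    and Ma: "\<And>p q. p \<in> skpoly \<Longrightarrow> q \<in> skpoly \<Longrightarrow> sk_coset I p \<in> M \<Longrightarrow> sk_coset I q \<in> M
            \<Longrightarrow> sk_coset I (sk_add p q) \<in> M"
    and Mn: "\<And>p. p \<in> skpoly \<Longrightarrow> sk_coset I p \<in> M \<Longrightarrow> sk_coset I (\<lambda>k. - p k) \<in> M"
    and Mm: "\<And>p s. p \<in> skpoly \<Longrightarrow> s \<in> skpoly \<Longrightarrow> sk_coset I p \<in> M \<Longrightarrow> sk_coset I (sk_mult \<alpha> p s) \<in> M"
    using M unfolding quot_submodule_def by blast+
  have riN: "right_ideal N" unfolding right_ideal_def N_def
  proof (intro conjI ballI allI)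
    show "0 \<in> {r. sk_coset I (sk_C r) \<in> M}" using M0 by (simp add: C_zero)
  next
    fix x y assume "x \<in> {r. sk_coset I (sk_C r) \<in> M}" "y \<in> {r. sk_coset I (sk_C r) \<in> M}"
    then show "x + y \<in> {r. sk_coset I (sk_C r) \<in> M}" using Ma[OF skpoly_C skpoly_C] by (simp add: C_add)
  next
    fix x assume "x \<in> {r. sk_coset I (sk_C r) \<in> M}"
    then show "- x \<in> {r. sk_coset I (sk_C r) \<in> M}" using Mn[OF skpoly_C] by (simp add: C_neg)
  next
    fix x r assume "x \<in> {r. sk_coset I (sk_C r) \<in> M}"
    then show "x * r \<in> {r. sk_coset I (sk_C r) \<in> M}" using Mm[OF skpoly_C skpoly_C] by (simp add: C_mult)
  qed
  obtain v where v: "u * v = 1" "v * u = 1" using u_inv by blast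
  have invN: "inv \<alpha> x \<in> N" if x: "x \<in> N" for x
  proof -
    have "sk_theta = smono (1::'a) 1" unfolding sk_theta_def smono_def by auto
    then have th: "(sk_theta :: nat \<Rightarrow> 'a) \<in> skpoly" using skpoly_smono by metis
    have "sk_coset I (sk_mult \<alpha> (sk_C x) sk_theta) \<in> M"
      using Mm[OF skpoly_C th] x by (simp add: N_def)
    moreover have "eps (sk_mult \<alpha> (sk_C x) sk_theta) = beta x"
    proof -
      have "eps (sk_mult \<alpha> (sk_C x) sk_theta) = act x sk_theta"
        by (simp add: eps_mult skpoly_C th eps_C)
      also have "\<dots> = (\<Sum>j\<in>{1}. (beta^^j) (x * sk_theta j))"
        by (rule act_sum) (auto simp: sk_theta_def)
      finally show ?thesis by (simp add: sk_theta_def)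
    qed
    ultimately have "sk_coset I (sk_C (beta x)) \<in> M"
      using coset_C[OF skpoly_mult[OF skpoly_C th]] by metis
    then have "beta x \<in> N" by (simp add: N_def)
    then have "beta x * v \<in> N" using riN by (simp add: ri_mult)
    moreover have "beta x * v = inv \<alpha> x"
      unfolding beta_def using uc[of "inv \<alpha> x"] v by (simp add: mult.assoc)
    ultimately show ?thesis by simp
  qed
  have sub: "N \<subseteq> \<alpha> ` N"
  proof
    fix x assume "x \<in> N" then show "x \<in> \<alpha> ` N" using invN a_ai by (metis image_eqI)
  qed
  define f where "f n = (\<alpha>^^n) ` N" for n
  have fri: "right_ideal (f n)" for n
  proof (induct n)
    case 0 then show ?case using riN by (simp add: f_def)
  next
    case (Suc n)
    have "f (Suc n) = \<alpha> ` f n" by (simp add: f_def image_comp)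
    then show ?case using ri_image[OF Suc] by simp
  qed
  have finc: "f n \<subseteq> f (Suc n)" for n
  proof -
    have "(\<alpha>^^n) ` N \<subseteq> (\<alpha>^^n) ` (\<alpha> ` N)" using sub by (rule image_mono)
    also have "\<dots> = (\<alpha>^^Suc n) ` N" by (simp only: funpow_Suc_right image_comp)
    finally show ?thesis by (simp add: f_def)
  qed
  have noe: "\<forall>g::nat \<Rightarrow> 'a set. (\<forall>n. right_ideal (g n)) \<and> (\<forall>n. g n \<subseteq> g (Suc n))
        \<longrightarrow> (\<exists>m. \<forall>n\<ge>m. g n = g m)"
    using noeth unfolding right_noetherian_def by simp
  have fc: "(\<forall>n. right_ideal (f n)) \<and> (\<forall>n. f n \<subseteq> f (Suc n))" using fri finc by simp
  obtain m where m: "\<forall>n\<ge>m. f n = f m"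
    using mp[OF spec[OF noe, of f] fc] by (elim exE)
  have fsm: "f (Suc m) = f m" using m[rule_format, of "Suc m"] by simp
  have "f (Suc m) = (\<alpha>^^m) ` (\<alpha> ` N)" unfolding f_def by (simp only: funpow_Suc_right image_comp)
  then have "(\<alpha>^^m) ` (\<alpha> ` N) = (\<alpha>^^m) ` N"
    using fsm by (simp add: f_def)
  moreover have "inj (\<alpha>^^m)" using a_inj by simp
  ultimately have stab: "\<alpha> ` N = N" by (simp add: inj_image_eq_iff)
  have "M = Phi \<alpha> u N"
  proof
    show "M \<subseteq> Phi \<alpha> u N"
    proof
      fix z assume z: "z \<in> M"
      then obtain q where q: "q \<in> skpoly" "z = sk_coset I q" using Mc unfolding quot_carrier_def by blast
      then have "eps q \<in> N" using z coset_C[OF q(1)] by (simp add: N_def)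
      then show "z \<in> Phi \<alpha> u N" using q by (simp add: Phi_mem)
    qed
  next
    show "Phi \<alpha> u N \<subseteq> M"
    proof
      fix z assume "z \<in> Phi \<alpha> u N"
      then obtain q where q: "q \<in> skpoly" "eps q \<in> N" "z = sk_coset I q" unfolding Phi_char by blast
      then show "z \<in> M" using coset_C[OF q(1)] by (simp add: N_def)
    qed
  qed
  then have Mq: "M = Phi \<alpha> u N" .
  show ?thesis by (rule exI[of _ N]) (rule conjI[OF riN conjI[OF stab Mq]])
qed

end



lemma ip_mem: "z \<in> ideal_prod I J \<longleftrightarrow> (\<exists>(n::nat) a b. z = (\<Sum>k<n. a k * b k) \<and> (\<forall>k<n. a k \<in> I \<and> b k \<in> J))"
  unfolding ideal_prod_def by auto

lemma ip_memI: "(\<forall>k<n. a k \<in> I \<and> b k \<in> J) \<Longrightarrow> (\<Sum>k<(n::nat). a k * b k) \<in> ideal_prod I J"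
  unfolding ip_mem by blast

lemma ip_sub: "right_ideal J \<Longrightarrow> ideal_prod J J \<subseteq> J"
  unfolding ideal_prod_def by (auto intro!: ri_sum ri_mult)

lemma ip_sq: "x \<in> J \<Longrightarrow> y \<in> J \<Longrightarrow> x * y \<in> ideal_prod J J"
  unfolding ideal_prod_def
  by (rule CollectI, rule exI[of _ 1], rule exI[of _ "\<lambda>_. x"], rule exI[of _ "\<lambda>_. y"]) simp

lemma ip_ri: "right_ideal J \<Longrightarrow> right_ideal (ideal_prod J J)"
  unfolding right_ideal_def[of "ideal_prod J J"]
proof (intro conjI ballI allI)
  show "0 \<in> ideal_prod J J" unfolding ideal_prod_def
    by (rule CollectI, rule exI[of _ 0]) simp
next
  fix x y assume "x \<in> ideal_prod J J" "y \<in> ideal_prod J J"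
  then obtain n m :: nat and a b a' b' where
    x: "x = (\<Sum>k<n. a k * b k)" "\<forall>k<n. a k \<in> J \<and> b k \<in> J" and
    y: "y = (\<Sum>k<m. a' k * b' k)" "\<forall>k<m. a' k \<in> J \<and> b' k \<in> J"
    unfolding ip_mem by blast
  define A where "A k = (if k < n then a k else a' (k - n))" for k
  define B where "B k = (if k < n then b k else b' (k - n))" for k
  have "x + y = (\<Sum>k<n+m. A k * B k)"
    unfolding x y sum_concat A_def B_def by (rule sum.cong) auto
  moreover have "\<forall>k<n+m. A k \<in> J \<and> B k \<in> J" using x y by (auto simp: A_def B_def)
  ultimately show "x + y \<in> ideal_prod J J" unfolding ip_mem by blast
next
  fix x assume "x \<in> ideal_prod J J"
  then obtain n :: nat and a b where x: "x = (\<Sum>k<n. a k * b k)" "\<forall>k<n. a k \<in> J \<and> b k \<in> J"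
    unfolding ip_mem by blast
  assume J: "right_ideal J"
  have "- x = (\<Sum>k<n. (- a k) * b k)" by (simp add: x sum_negf)
  moreover have "(\<Sum>k<n. (- a k) * b k) \<in> ideal_prod J J"
    by (rule ip_memI) (use x J in \<open>auto intro: ri_neg\<close>)
  ultimately show "- x \<in> ideal_prod J J" by simp
next
  fix x r assume "x \<in> ideal_prod J J"
  then obtain n :: nat and a b where x: "x = (\<Sum>k<n. a k * b k)" "\<forall>k<n. a k \<in> J \<and> b k \<in> J"
    unfolding ip_mem by blast
  assume J: "right_ideal J"
  have "x * r = (\<Sum>k<n. a k * (b k * r))" by (simp add: x sum_distrib_right mult.assoc)
  moreover have "(\<Sum>k<n. a k * (b k * r)) \<in> ideal_prod J J"
    by (rule ip_memI) (use x J in \<open>auto intro: ri_mult\<close>)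
  ultimately show "x * r \<in> ideal_prod J J" by simp
qed

context skew begin

lemma a_sum: "\<alpha> (sum f A) = (\<Sum>i\<in>A. \<alpha> (f i))"
  by (rule additive_sum) (auto simp: a_add a_zero)

lemma ip_stab: "\<alpha> ` J = J \<Longrightarrow> \<alpha> ` ideal_prod J J = ideal_prod J J"
proof
  assume J: "\<alpha> ` J = J"
  show "\<alpha> ` ideal_prod J J \<subseteq> ideal_prod J J"
  proof
    fix z assume "z \<in> \<alpha> ` ideal_prod J J"
    then obtain w where w: "w \<in> ideal_prod J J" "z = \<alpha> w" by blast
    then obtain n :: nat and a b where z: "z = \<alpha> (\<Sum>k<n. a k * b k)" "\<forall>k<n. a k \<in> J \<and> b k \<in> J"
      unfolding ip_mem by blast
    have "z = (\<Sum>k<n. \<alpha> (a k) * \<alpha> (b k))" by (simp add: z a_sum a_mult)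
    moreover have "(\<Sum>k<n. \<alpha> (a k) * \<alpha> (b k)) \<in> ideal_prod J J"
      by (rule ip_memI) (use z J in blast)
    ultimately show "z \<in> ideal_prod J J" by simp
  qed
  show "ideal_prod J J \<subseteq> \<alpha> ` ideal_prod J J"
  proof
    fix z assume "z \<in> ideal_prod J J"
    then obtain n :: nat and a b where z: "z = (\<Sum>k<n. a k * b k)" "\<forall>k<n. a k \<in> J \<and> b k \<in> J"
      unfolding ip_mem by blast
    have inv: "inv \<alpha> w \<in> J" if "w \<in> J" for w
      using that J by (metis ai_a imageE)
    have "z = \<alpha> (\<Sum>k<n. inv \<alpha> (a k) * inv \<alpha> (b k))" by (simp add: z a_sum a_mult a_ai)
    moreover have "(\<Sum>k<n. inv \<alpha> (a k) * inv \<alpha> (b k)) \<in> ideal_prod J J"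
      by (rule ip_memI) (use z inv in blast)
    ultimately show "z \<in> \<alpha> ` ideal_prod J J" by blast
  qed
qed

end

theorem lemma2p4:
  fixes \<alpha> :: "'a::ring_1 \<Rightarrow> 'a" and u :: 'a
  assumes "right_noetherian TYPE('a)"
    and "ring_automorphism \<alpha>"
    and "central_unit u"
  shows "bij_betw (Phi \<alpha> u) {N. right_ideal N \<and> \<alpha> ` N = N}
                           {M. quot_submodule \<alpha> (genS \<alpha> u) M}
       \<and> (\<forall>N1\<in>{N. right_ideal N \<and> \<alpha> ` N = N}. \<forall>N2\<in>{N. right_ideal N \<and> \<alpha> ` N = N}.
              N1 \<subseteq> N2 \<longleftrightarrow> Phi \<alpha> u N1 \<subseteq> Phi \<alpha> u N2)
       \<and> ((\<forall>x y::'a. x * y = y * x) \<longrightarrow>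
              (quot_simple \<alpha> (genS \<alpha> u) \<longleftrightarrow> alpha_simple \<alpha>))
       \<and> ((\<forall>x y::'a. x * y = y * x) \<and> (\<forall>x y::'a. x * y = 0 \<longrightarrow> x = 0 \<or> y = 0)
            \<and> no_nontrivial_idempotent_ideals TYPE('a) \<longrightarrow>
              (quot_artinian \<alpha> (genS \<alpha> u) \<longleftrightarrow> alpha_simple \<alpha>))"
proof -
  interpret skew \<alpha> u using assms(2,3) by unfold_locales
  have surj: "\<exists>N. right_ideal N \<and> \<alpha> ` N = N \<and> M = Phi \<alpha> u N"
    if "quot_submodule \<alpha> I M" for M using Phi_surj[OF assms(1) that] .
  have bij: "bij_betw (Phi \<alpha> u) {N. right_ideal N \<and> \<alpha> ` N = N} {M. quot_submodule \<alpha> I M}"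
    unfolding bij_betw_def
  proof
    show "inj_on (Phi \<alpha> u) {N. right_ideal N \<and> \<alpha> ` N = N}"
      by (rule inj_onI) (rule Phi_inj)
    show "Phi \<alpha> u ` {N. right_ideal N \<and> \<alpha> ` N = N} = {M. quot_submodule \<alpha> I M}"
      using Phi_submodule surj by blast
  qed
  have ord: "\<forall>N1\<in>{N. right_ideal N \<and> \<alpha> ` N = N}. \<forall>N2\<in>{N. right_ideal N \<and> \<alpha> ` N = N}.
              N1 \<subseteq> N2 \<longleftrightarrow> Phi \<alpha> u N1 \<subseteq> Phi \<alpha> u N2"
    by (simp add: Phi_le)
  have z1: "(UNIV::'a set) \<noteq> {0}" by (metis singletonD UNIV_I zero_neq_one)
  have ri0: "right_ideal {0::'a}" "\<alpha> ` {0} = {0}" by (auto simp: right_ideal_def a_zero)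
  have riU: "right_ideal (UNIV::'a set)" "\<alpha> ` UNIV = UNIV" by (auto simp: right_ideal_def a_surj)
  have ts: "two_sided_ideal N \<longleftrightarrow> right_ideal N" if comm: "\<forall>x y::'a. x * y = y * x" for N :: "'a set"
  proof
    assume "two_sided_ideal N" then show "right_ideal N" by (simp add: two_sided_ideal_def)
  next
    assume R: "right_ideal N"
    have "\<forall>x\<in>N. \<forall>r. r * x \<in> N"
    proof (intro ballI allI)
      fix x r :: 'a assume "x \<in> N"
      then have "x * r \<in> N" by (rule ri_mult[OF R])
      then show "r * x \<in> N" by (simp add: comm[rule_format, of r x])
    qed
    then show "two_sided_ideal N" using R by (simp add: two_sided_ideal_def)
  qed
  have b: "(\<forall>x y::'a. x * y = y * x) \<longrightarrow> (quot_simple \<alpha> I \<longleftrightarrow> alpha_simple \<alpha>)"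
  proof
    assume comm: "\<forall>x y::'a. x * y = y * x"
    show "quot_simple \<alpha> I \<longleftrightarrow> alpha_simple \<alpha>"
    proof
      assume qs: "quot_simple \<alpha> I"
      show "alpha_simple \<alpha>" unfolding alpha_simple_def
      proof (intro allI impI)
        fix N assume "two_sided_ideal N \<and> \<alpha> ` N = N"
        then have N: "right_ideal N" "\<alpha> ` N = N" using ts[OF comm] by auto
        then have "Phi \<alpha> u N = {sk_coset I sk_zero} \<or> Phi \<alpha> u N = quot_carrier I"
          using qs Phi_submodule unfolding quot_simple_def by blast
        then show "N = {0} \<or> N = UNIV" using Phi_zero Phi_carrier Phi_inj by metis
      qed
    next
      assume as: "alpha_simple \<alpha>"
      show "quot_simple \<alpha> I" unfolding quot_simple_def
      proof (intro conjI allI impI)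
        show "quot_carrier I \<noteq> {sk_coset I sk_zero}"
          unfolding Phi_carrier Phi_zero[symmetric] using Phi_inj z1 by blast
        fix M assume "quot_submodule \<alpha> I M"
        then obtain N where N: "right_ideal N" "\<alpha> ` N = N" "M = Phi \<alpha> u N" using surj by blast
        then have "N = {0} \<or> N = UNIV" using as ts[OF comm] unfolding alpha_simple_def by blast
        then show "M = {sk_coset I sk_zero} \<or> M = quot_carrier I"
          using N Phi_zero Phi_carrier by auto
      qed
    qed
  qed
  have c: "(\<forall>x y::'a. x * y = y * x) \<and> (\<forall>x y::'a. x * y = 0 \<longrightarrow> x = 0 \<or> y = 0)
            \<and> no_nontrivial_idempotent_ideals TYPE('a) \<longrightarrow>
              (quot_artinian \<alpha> I \<longleftrightarrow> alpha_simple \<alpha>)"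
  proof
    assume H: "(\<forall>x y::'a. x * y = y * x) \<and> (\<forall>x y::'a. x * y = 0 \<longrightarrow> x = 0 \<or> y = 0)
            \<and> no_nontrivial_idempotent_ideals TYPE('a)"
    then have comm: "\<forall>x y::'a. x * y = y * x" and dom: "\<And>x y::'a. x * y = 0 \<Longrightarrow> x = 0 \<or> y = 0"
      and nii: "no_nontrivial_idempotent_ideals TYPE('a)" by auto
    show "quot_artinian \<alpha> I \<longleftrightarrow> alpha_simple \<alpha>"
    proof
      assume art: "quot_artinian \<alpha> I"
      show "alpha_simple \<alpha>" unfolding alpha_simple_def
      proof (intro allI impI)
        fix I0 assume "two_sided_ideal I0 \<and> \<alpha> ` I0 = I0"
        then have I0: "right_ideal I0" "\<alpha> ` I0 = I0" using ts[OF comm] by auto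
        show "I0 = {0} \<or> I0 = UNIV"
        proof (rule ccontr)
          assume nt: "\<not> (I0 = {0} \<or> I0 = UNIV)"
          then obtain x0 where x0: "x0 \<in> I0" "x0 \<noteq> 0" using ri_zero[OF I0(1)] by blast
          define J where "J n = ((\<lambda>J. ideal_prod J J)^^n) I0" for n
          have JS: "J (Suc n) = ideal_prod (J n) (J n)" for n by (simp add: J_def)
          have props: "right_ideal (J n) \<and> \<alpha> ` J n = J n \<and> J n \<subseteq> I0 \<and> (\<exists>x\<in>J n. x \<noteq> 0)" for n
          proof (induct n)
            case 0 then show ?case using I0 x0 by (auto simp: J_def)
          next
            case (Suc n)
            then obtain x where x: "x \<in> J n" "x \<noteq> 0" by blast
            have "x * x \<in> J (Suc n)" "x * x \<noteq> 0" using ip_sq[OF x(1) x(1)] dom x(2) by (auto simp: JS)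
            then show ?case using Suc ip_ri ip_stab ip_sub unfolding JS by blast
          qed
          define f where "f n = Phi \<alpha> u (J n)" for n
          have "\<forall>n. quot_submodule \<alpha> I (f n)" using props Phi_submodule by (simp add: f_def)
          moreover have "\<forall>n. f (Suc n) \<subseteq> f n"
          proof
            fix n show "f (Suc n) \<subseteq> f n"
              using ip_sub[OF conjunct1[OF props[of n]]] by (simp add: f_def Phi_le JS)
          qed
          ultimately obtain m where m: "\<forall>n\<ge>m. f n = f m" using art unfolding quot_artinian_def by blast
          have "f (Suc m) = f m" using m[rule_format, of "Suc m"] by simp
          then have "J (Suc m) = J m" using Phi_inj by (simp add: f_def)
          then have "ideal_prod (J m) (J m) = J m" by (simp add: JS)
          then have "J m = {0} \<or> J m = UNIV" using nii props[of m] ts[OF comm]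
            unfolding no_nontrivial_idempotent_ideals_def by blast
          then show False using props[of m] nt by auto
        qed
      qed
    next
      assume as: "alpha_simple \<alpha>"
      have each: "M = Phi \<alpha> u {0} \<or> M = Phi \<alpha> u UNIV" if qM: "quot_submodule \<alpha> I M" for M
      proof -
        obtain N where N: "right_ideal N" "\<alpha> ` N = N" "M = Phi \<alpha> u N" using surj[OF qM] by blast
        then have "N = {0} \<or> N = UNIV" using as ts[OF comm] unfolding alpha_simple_def by blast
        then show ?thesis using N by auto
      qed
      show "quot_artinian \<alpha> I" unfolding quot_artinian_def
      proof (intro allI impI)
        fix f :: "nat \<Rightarrow> (nat \<Rightarrow> 'a) set set"
        assume ch: "(\<forall>n. quot_submodule \<alpha> I (f n)) \<and> (\<forall>n. f (Suc n) \<subseteq> f n)"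
        have dec: "m \<le> n \<Longrightarrow> f n \<subseteq> f m" for m n
          by (induct n rule: dec_induct) (use ch in blast)+
        show "\<exists>m. \<forall>n\<ge>m. f n = f m"
        proof (cases "\<exists>m. f m = Phi \<alpha> u {0}")
          case True
          then obtain m where m: "f m = Phi \<alpha> u {0}" by blast
          have "f n = f m" if "n \<ge> m" for n
          proof -
            have "f n \<subseteq> Phi \<alpha> u {0}" using dec[OF that] m by simp
            moreover have "\<not> Phi \<alpha> u UNIV \<subseteq> Phi \<alpha> u {0}" using Phi_le z1 by blast
            ultimately show ?thesis using each ch m by metis
          qed
          then show ?thesis by blast
        next
          case False
          then have "f n = Phi \<alpha> u UNIV" for n using each ch by blast
          then show ?thesis by blast
        qed
      qed
    qed
  qed
  show ?thesis using bij ord b c by blast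
qed


end
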